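(* Let $P$ be the barycentric subdivision of a simplicial complex $K$. Then the interval monoid $\mathcal{M}(P)$ is a gcd-monoid.
   Context: A simplicial complex $K$ is a collection of nonempty finite subsets (simplices) of a vertex set with all singletons simplices and closed under nonempty subsets. Its barycentric subdivision is the poset of all simplices of $K$ ordered by inclusion. For a poset $P$, $\mathcal{M}(P)$ is the monoid presented by generators $[x,y]$ for $x\le y$ in $P$, relations $[x,x]=1$ and $[x,z]=[x,y][y,z]$ for $x\le y\le z$. A gcd-monoid is a monoid that is conical ($xy=1\Rightarrow x=1$), left and right cancellative, and in which any two elements have a greatest lower bound for left divisibility ($a\leqslant b$ iff $b=ax$ for some $x$) and for right divisibility ($a\mathbin{\widetilde\leqslant}b$ iff $b=xa$ for some $x$). *)

theory Defs
  imports "HOL-Algebra.Group"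
begin

definition simplicial_complex :: "'v set \<Rightarrow> 'v set set \<Rightarrow> bool" where
  "simplicial_complex V K \<longleftrightarrow>
     (\<forall>s\<in>K. finite s \<and> s \<noteq> {} \<and> s \<subseteq> V) \<and>
     (\<forall>v\<in>V. {v} \<in> K) \<and>
     (\<forall>s\<in>K. \<forall>t. t \<subseteq> s \<and> t \<noteq> {} \<longrightarrow> t \<in> K)"

text \<open>The barycentric subdivision is the poset (K, subset); we represent a poset by a carrier
and an order relation.\<close>

definition im_gens :: "'a set \<Rightarrow> ('a \<Rightarrow> 'a \<Rightarrow> bool) \<Rightarrow> ('a \<times> 'a) set" where
  "im_gens A r = {(x, y). x \<in> A \<and> y \<in> A \<and> r x y}"

inductive im_eq :: "'a set \<Rightarrow> ('a \<Rightarrow> 'a \<Rightarrow> bool) \<Rightarrow> ('a \<times> 'a) list \<Rightarrow> ('a \<times> 'a) list \<Rightarrow> bool"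
  for A r where
  im_refl: "set w \<subseteq> im_gens A r \<Longrightarrow> im_eq A r w w"
| im_sym: "im_eq A r u v \<Longrightarrow> im_eq A r v u"
| im_trans: "im_eq A r u v \<Longrightarrow> im_eq A r v w \<Longrightarrow> im_eq A r u w"
| im_unit: "x \<in> A \<Longrightarrow> r x x \<Longrightarrow> im_eq A r [(x, x)] []"
| im_split: "x \<in> A \<Longrightarrow> y \<in> A \<Longrightarrow> z \<in> A \<Longrightarrow> r x y \<Longrightarrow> r y z \<Longrightarrow>
             im_eq A r [(x, z)] [(x, y), (y, z)]"
| im_cong: "im_eq A r u u' \<Longrightarrow> im_eq A r v v' \<Longrightarrow> im_eq A r (u @ v) (u' @ v')"

definition interval_monoid :: "'a set \<Rightarrow> ('a \<Rightarrow> 'a \<Rightarrow> bool) \<Rightarrow> ('a \<times> 'a) list set monoid" where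
  "interval_monoid A r =
     \<lparr> carrier = {{v. im_eq A r u v} | u. set u \<subseteq> im_gens A r},
       mult = (\<lambda>X Y. \<Union>{{w. im_eq A r (u @ v) w} | u v. u \<in> X \<and> v \<in> Y}),
       one = {v. im_eq A r [] v} \<rparr>"

definition left_div :: "('a, 'b) monoid_scheme \<Rightarrow> 'a \<Rightarrow> 'a \<Rightarrow> bool" where
  "left_div G a b \<longleftrightarrow> (\<exists>x\<in>carrier G. b = a \<otimes>\<^bsub>G\<^esub> x)"

definition right_div :: "('a, 'b) monoid_scheme \<Rightarrow> 'a \<Rightarrow> 'a \<Rightarrow> bool" where
  "right_div G a b \<longleftrightarrow> (\<exists>x\<in>carrier G. b = x \<otimes>\<^bsub>G\<^esub> a)"

definition gcd_monoid :: "('a, 'b) monoid_scheme \<Rightarrow> bool" where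
  "gcd_monoid G \<longleftrightarrow>
     monoid G \<and>
     (\<forall>x\<in>carrier G. \<forall>y\<in>carrier G. x \<otimes>\<^bsub>G\<^esub> y = \<one>\<^bsub>G\<^esub> \<longrightarrow> x = \<one>\<^bsub>G\<^esub>) \<and>
     (\<forall>a\<in>carrier G. \<forall>x\<in>carrier G. \<forall>y\<in>carrier G.
        a \<otimes>\<^bsub>G\<^esub> x = a \<otimes>\<^bsub>G\<^esub> y \<longrightarrow> x = y) \<and>
     (\<forall>a\<in>carrier G. \<forall>x\<in>carrier G. \<forall>y\<in>carrier G.
        x \<otimes>\<^bsub>G\<^esub> a = y \<otimes>\<^bsub>G\<^esub> a \<longrightarrow> x = y) \<and>
     (\<forall>a\<in>carrier G. \<forall>b\<in>carrier G. \<exists>d\<in>carrier G.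
        left_div G d a \<and> left_div G d b \<and>
        (\<forall>c\<in>carrier G. left_div G c a \<and> left_div G c b \<longrightarrow> left_div G c d)) \<and>
     (\<forall>a\<in>carrier G. \<forall>b\<in>carrier G. \<exists>d\<in>carrier G.
        right_div G d a \<and> right_div G d b \<and>
        (\<forall>c\<in>carrier G. right_div G c a \<and> right_div G c b \<longrightarrow> right_div G c d))"

end

theory Submission
  imports Defs
begin


fun cns :: "('a \<times> 'a) \<Rightarrow> ('a \<times> 'a) list \<Rightarrow> ('a \<times> 'a) list" where
  "cns g [] = (if fst g = snd g then [] else [g])"
| "cns g (h # w) = (if fst g = snd g then h # w
      else if snd g = fst h then (fst g, snd h) # w else g # h # w)"

fun nf :: "('a \<times> 'a) list \<Rightarrow> ('a \<times> 'a) list" where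
  "nf [] = []"
| "nf (g # w) = cns g (nf w)"

fun red :: "('a \<times> 'a) list \<Rightarrow> bool" where
  "red [] = True"
| "red (g # w) = (fst g \<noteq> snd g \<and> (case w of [] \<Rightarrow> True | h # _ \<Rightarrow> snd g \<noteq> fst h) \<and> red w)"

definition join :: "('a \<times> 'a) list \<Rightarrow> ('a \<times> 'a) list \<Rightarrow> ('a \<times> 'a) list" where
  "join a b = (if a = [] \<or> b = [] then a @ b
     else if snd (last a) = fst (hd b) then butlast a @ (fst (last a), snd (hd b)) # tl b
     else a @ b)"

fun ldiv :: "('a \<Rightarrow> 'a \<Rightarrow> bool) \<Rightarrow> ('a \<times> 'a) list \<Rightarrow> ('a \<times> 'a) list \<Rightarrow> bool" where
  "ldiv r [] a = True"
| "ldiv r (g # d) [] = False"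
| "ldiv r (g # d) (h # a) = (if d = [] then fst g = fst h \<and> r (snd g) (snd h) else g = h \<and> ldiv r d a)"

fun lgcd :: "('a \<Rightarrow> 'a \<Rightarrow> 'a) \<Rightarrow> ('a \<times> 'a) list \<Rightarrow> ('a \<times> 'a) list \<Rightarrow> ('a \<times> 'a) list" where
  "lgcd m (g # a) (h # b) = (if g = h then g # lgcd m a b
     else if fst g = fst h \<and> fst g \<noteq> m (snd g) (snd h) then [(fst g, m (snd g) (snd h))] else [])"
| "lgcd m _ _ = []"

lemma red_nf_id: "red w \<Longrightarrow> nf w = w"
  by (induction w) (auto split: list.splits)

lemma cns_triv: "fst g = snd g \<Longrightarrow> cns g w = w"
  by (cases w) auto

lemma cns_assoc: "x \<noteq> z \<Longrightarrow> x \<noteq> y \<Longrightarrow> cns (x, z) n = cns (x, y) (cns (y, z) n)"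
  by (cases n) auto

lemma join_Cons: "d \<noteq> [] \<Longrightarrow> join (g # d) x = g # join d x"
  by (auto simp: join_def)

lemma join_hd: "a \<noteq> [] \<Longrightarrow> join a b \<noteq> [] \<and> fst (hd (join a b)) = fst (hd a)"
  apply (induction a)
   apply simp
  subgoal for g a by (cases "a = []") (auto simp: join_Cons join_def)
  done

lemma nf_join: "red a \<Longrightarrow> red b \<Longrightarrow> nf (a @ b) = join a b"
proof (induction a)
  case Nil
  then show ?case by (simp add: red_nf_id join_def)
next
  case (Cons g a)
  show ?case
  proof (cases "a = []")
    case True
    then show ?thesis using Cons.prems red_nf_id[of b]
      by (cases b) (auto simp: join_def)
  next
    case False
    have "nf ((g # a) @ b) = cns g (join a b)" using Cons by auto
    also have "\<dots> = g # join a b"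
      using join_hd[OF False, of b] Cons.prems False
      by (cases "join a b"; cases a) auto
    finally show ?thesis using join_Cons[OF False] by simp
  qed
qed

lemma join_cancel:
  assumes "red x" "red y" "join a x = join a y" shows "x = y"
proof (cases "a = []")
  case True then show ?thesis using assms by (simp add: join_def)
next
  case False
  then obtain a0 g1 g2 where a: "a = a0 @ [(g1, g2)]" by (metis rev_exhaust surj_pair)
  show ?thesis
  proof (cases x)
    case Nil
    then show ?thesis using assms a by (cases y) (auto simp: join_def split: if_splits)
  next
    case (Cons h x')
    then show ?thesis using assms a by (cases y) (auto simp: join_def split: if_splits)
  qed
qed



locale poctx =
  fixes A :: "'a set" and r :: "'a \<Rightarrow> 'a \<Rightarrow> bool"
  assumes rrefl: "r x x"
    and rtrans: "r x y \<Longrightarrow> r y z \<Longrightarrow> r x z"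
    and rantisym: "r x y \<Longrightarrow> r y x \<Longrightarrow> x = y"
begin

definition valid :: "('a \<times> 'a) list \<Rightarrow> bool" where
  "valid w \<longleftrightarrow> (\<forall>p\<in>set w. r (fst p) (snd p))"

lemma valid_simps[simp]: "valid []" "valid (g # w) \<longleftrightarrow> r (fst g) (snd g) \<and> valid w"
  "valid (u @ v) \<longleftrightarrow> valid u \<and> valid v"
  by (auto simp: valid_def)

lemma gens_valid: "set w \<subseteq> im_gens A r \<Longrightarrow> valid w"
  by (auto simp: valid_def im_gens_def)

lemma cns_valid: "valid (g # w) \<Longrightarrow> valid (cns g w)"
  by (cases w) (auto intro: rtrans)

lemma nf_valid: "valid w \<Longrightarrow> valid (nf w)"
  by (induction w) (auto intro!: cns_valid)

lemma cns_gens: "g \<in> im_gens A r \<Longrightarrow> set w \<subseteq> im_gens A r \<Longrightarrow> set (cns g w) \<subseteq> im_gens A r"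
  by (cases w) (auto simp: im_gens_def intro: rtrans)

lemma nf_gens: "set w \<subseteq> im_gens A r \<Longrightarrow> set (nf w) \<subseteq> im_gens A r"
proof (induction w)
  case (Cons g w) then show ?case using cns_gens[of g "nf w"] by simp
qed simp

lemma ne_trans: "r x y \<Longrightarrow> r y z \<Longrightarrow> x \<noteq> y \<Longrightarrow> x \<noteq> z"
  using rantisym rtrans by blast

lemma key: "valid (g # w) \<Longrightarrow> nf (cns g w @ v) = cns g (nf (w @ v))"
proof (cases w)
  case Nil
  then show ?thesis by (cases "fst g = snd g") (auto simp: cns_triv)
next
  case (Cons h w')
  assume vg: "valid (g # w)"
  obtain x y where g: "g = (x, y)" by (cases g)
  obtain y' z where h: "h = (y', z)" by (cases h)
  show ?thesis
  proof (cases "x = y")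
    case True then show ?thesis using Cons g by (simp add: cns_triv)
  next
    case False
    show ?thesis
    proof (cases "y = y'")
      case True
      have "x \<noteq> z" using vg Cons g h True False ne_trans by auto
      then show ?thesis using Cons g h True False cns_assoc[of x z y] by simp
    next
      case F2: False
      then show ?thesis using Cons g h False by simp
    qed
  qed
qed

lemma nf_nf: "valid v \<Longrightarrow> nf (nf v) = nf v"
proof (induction v)
  case Nil then show ?case by simp
next
  case (Cons g v)
  have "nf (nf (g # v)) = nf (cns g (nf v) @ [])" by simp
  also have "\<dots> = cns g (nf (nf v @ []))"
    using Cons by (intro key) (auto intro: nf_valid)
  finally show ?case using Cons by simp
qed

lemma nf_app2: "valid v \<Longrightarrow> nf (u @ v) = nf (u @ nf v)"
  by (induction u) (auto simp: nf_nf)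

lemma nf_app1: "valid u \<Longrightarrow> nf (u @ v) = nf (nf u @ v)"
proof (induction u)
  case Nil then show ?case by simp
next
  case (Cons g u)
  have "nf ((g # u) @ v) = cns g (nf (nf u @ v))" using Cons by simp
  also have "\<dots> = nf (cns g (nf u) @ v)"
    using Cons by (intro key[symmetric]) (auto intro: nf_valid)
  finally show ?case by simp
qed

lemma im_eq_sound: "im_eq A r u v \<Longrightarrow> set u \<subseteq> im_gens A r \<and> set v \<subseteq> im_gens A r \<and> nf u = nf v"
proof (induction rule: im_eq.induct)
  case (im_split x y z)
  have "nf [(x, z)] = nf [(x, y), (y, z)]"
  proof (cases "x = y")
    case True then show ?thesis by simp
  next
    case False
    then have "x \<noteq> z" using ne_trans[of x y z] im_split by auto
    then show ?thesis using False by (cases "y = z") auto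
  qed
  then show ?case using im_split rtrans[of x y z] by (auto simp: im_gens_def)
next
  case (im_cong u u' v v')
  then have vs: "valid u" "valid v" "valid u'" "valid v'" using gens_valid by auto
  have "nf (u @ v) = nf (nf u @ nf v)" by (rule trans[OF nf_app1[OF vs(1)] nf_app2[OF vs(2)]])
  moreover have "nf (u' @ v') = nf (nf u' @ nf v')" by (rule trans[OF nf_app1[OF vs(3)] nf_app2[OF vs(4)]])
  ultimately show ?case using im_cong by (simp only: set_append) auto
qed (auto simp: im_gens_def rrefl)

lemma im_eq_nf: "set w \<subseteq> im_gens A r \<Longrightarrow> im_eq A r w (nf w)"
proof (induction w)
  case Nil then show ?case by (simp add: im_refl)
next
  case (Cons g w)
  have gw: "g \<in> im_gens A r" "set w \<subseteq> im_gens A r" using Cons by auto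
  have nw: "set (nf w) \<subseteq> im_gens A r" using gw(2) by (rule nf_gens)
  have g1: "im_eq A r [g] [g]" using gw by (intro im_refl) auto
  have 1: "im_eq A r (g # w) (g # nf w)"
    using im_cong[OF g1 Cons.IH[OF gw(2)]] by simp
  have 2: "im_eq A r (g # nf w) (cns g (nf w))"
  proof (cases "fst g = snd g")
    case True
    then have "im_eq A r [g] []" using gw by (cases g) (auto simp: im_gens_def intro!: im_unit)
    then have "im_eq A r ([g] @ nf w) ([] @ nf w)" by (rule im_cong[OF _ im_refl[OF nw]])
    then show ?thesis using True by (simp add: cns_triv)
  next
    case False
    show ?thesis
    proof (cases "nf w")
      case Nil then show ?thesis using False g1 by simp
    next
      case (Cons h w')
      show ?thesis
      proof (cases "snd g = fst h")
        case True
        obtain x y where g: "g = (x, y)" by (cases g)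
        obtain z where h: "h = (y, z)" using True g by (cases h) auto
        have hw: "h \<in> im_gens A r" "set w' \<subseteq> im_gens A r" using nw Cons by auto
        have "im_eq A r [(x, y), (y, z)] [(x, z)]"
          using gw hw g h by (intro im_sym[OF im_split]) (auto simp: im_gens_def)
        then have "im_eq A r ([(x, y), (y, z)] @ w') ([(x, z)] @ w')"
          by (rule im_cong[OF _ im_refl[OF hw(2)]])
        then show ?thesis using Cons g h False by simp
      next
        case F2: False
        have "im_eq A r (g # nf w) (g # nf w)" using gw nw by (intro im_refl) auto
        then show ?thesis using Cons False F2 by simp
      qed
    qed
  qed
  show ?case using im_trans[OF 1 2] by simp
qed

lemma im_eq_iff: "im_eq A r u v \<longleftrightarrow> set u \<subseteq> im_gens A r \<and> set v \<subseteq> im_gens A r \<and> nf u = nf v"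
proof
  assume "set u \<subseteq> im_gens A r \<and> set v \<subseteq> im_gens A r \<and> nf u = nf v"
  then show "im_eq A r u v" using im_eq_nf[of u] im_eq_nf[of v] im_sym im_trans by metis
qed (rule im_eq_sound)

lemma red_nf: "valid w \<Longrightarrow> red (nf w)"
proof (induction w)
  case Nil then show ?case by simp
next
  case (Cons g w)
  have v: "valid (nf w)" using Cons nf_valid by auto
  show ?case
  proof (cases "nf w")
    case Nil then show ?thesis using Cons by simp
  next
    case Cons2: (Cons h w')
    have rh: "red (h # w')" using Cons Cons2 by simp
    have vv: "r (fst g) (snd g)" "r (fst h) (snd h)" using Cons.prems v Cons2 by auto
    show ?thesis
    proof (cases "fst g = snd g")
      case True then show ?thesis using Cons2 rh by (simp add: cns_triv)
    next
      case False
      show ?thesis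
      proof (cases "snd g = fst h")
        case True
        then have "fst g \<noteq> snd h" using ne_trans[of "fst g" "snd g" "snd h"] vv False by auto
        then show ?thesis using Cons2 rh False True by (cases w') auto
      next
        case F2: False
        then show ?thesis using Cons2 rh False by simp
      qed
    qed
  qed
qed

end


context poctx
begin

definition cls :: "('a \<times> 'a) list \<Rightarrow> ('a \<times> 'a) list set" where
  "cls w = {v. im_eq A r w v}"

lemma carrier_M: "carrier (interval_monoid A r) = {cls u | u. set u \<subseteq> im_gens A r}"
  by (simp add: interval_monoid_def cls_def)

lemma one_M: "\<one>\<^bsub>interval_monoid A r\<^esub> = cls []"
  by (simp add: interval_monoid_def cls_def)

lemma cls_eq: "set u \<subseteq> im_gens A r \<Longrightarrow> set v \<subseteq> im_gens A r \<Longrightarrow> cls u = cls v \<longleftrightarrow> nf u = nf v"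
proof
  assume u: "set u \<subseteq> im_gens A r" and v: "set v \<subseteq> im_gens A r" and e: "cls u = cls v"
  have "v \<in> cls v" using v by (simp add: cls_def im_refl)
  then have "v \<in> cls u" using e by simp
  then have "im_eq A r u v" by (simp add: cls_def)
  then show "nf u = nf v" using im_eq_sound by blast
next
  assume u: "set u \<subseteq> im_gens A r" and v: "set v \<subseteq> im_gens A r" and e: "nf u = nf v"
  show "cls u = cls v" unfolding cls_def using u v e im_eq_iff by auto
qed

lemma mult_M: "set u \<subseteq> im_gens A r \<Longrightarrow> set v \<subseteq> im_gens A r \<Longrightarrow>
   cls u \<otimes>\<^bsub>interval_monoid A r\<^esub> cls v = cls (u @ v)"
proof -
  assume u: "set u \<subseteq> im_gens A r" and v: "set v \<subseteq> im_gens A r"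
  have "\<Union>{{w. im_eq A r (u' @ v') w} | u' v'. u' \<in> cls u \<and> v' \<in> cls v} = cls (u @ v)"
  proof (intro equalityI subsetI)
    fix x assume "x \<in> \<Union>{{w. im_eq A r (u' @ v') w} | u' v'. u' \<in> cls u \<and> v' \<in> cls v}"
    then obtain u' v' where "im_eq A r u u'" "im_eq A r v v'" "im_eq A r (u' @ v') x"
      by (auto simp: cls_def)
    then show "x \<in> cls (u @ v)" unfolding cls_def using im_cong im_trans by blast
  next
    fix x assume "x \<in> cls (u @ v)"
    moreover have "u \<in> cls u" "v \<in> cls v" using u v by (auto simp: cls_def im_refl)
    ultimately show "x \<in> \<Union>{{w. im_eq A r (u' @ v') w} | u' v'. u' \<in> cls u \<and> v' \<in> cls v}"
      by (auto simp: cls_def)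
  qed
  then show ?thesis by (simp add: interval_monoid_def)
qed

lemma cls_nf: "set u \<subseteq> im_gens A r \<Longrightarrow> cls (nf u) = cls u"
  using cls_eq[of "nf u" u] nf_gens nf_nf gens_valid by auto

lemma carrier_red: "X \<in> carrier (interval_monoid A r) \<Longrightarrow>
   \<exists>w. set w \<subseteq> im_gens A r \<and> red w \<and> X = cls w"
proof -
  assume "X \<in> carrier (interval_monoid A r)"
  then obtain u where u: "set u \<subseteq> im_gens A r" "X = cls u" by (auto simp: carrier_M)
  then show ?thesis using nf_gens[OF u(1)] red_nf[OF gens_valid[OF u(1)]] cls_nf[OF u(1)]
    by metis
qed

lemma cls_in: "set u \<subseteq> im_gens A r \<Longrightarrow> cls u \<in> carrier (interval_monoid A r)"
  by (auto simp: carrier_M)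

lemma join_props: "red a \<Longrightarrow> red b \<Longrightarrow> set a \<subseteq> im_gens A r \<Longrightarrow> set b \<subseteq> im_gens A r \<Longrightarrow>
  red (join a b) \<and> set (join a b) \<subseteq> im_gens A r \<and> cls (join a b) = cls (a @ b)"
  using nf_join[of a b] red_nf[of "a @ b"] nf_gens[of "a @ b"] cls_nf[of "a @ b"] gens_valid[of "a @ b"]
  by auto

lemma red_eq: "red a \<Longrightarrow> red b \<Longrightarrow> set a \<subseteq> im_gens A r \<Longrightarrow> set b \<subseteq> im_gens A r \<Longrightarrow>
  cls a = cls b \<longleftrightarrow> a = b"
  using cls_eq red_nf_id by metis

lemma monoid_M: "monoid (interval_monoid A r)"
proof (rule monoidI)
  fix x y assume "x \<in> carrier (interval_monoid A r)" "y \<in> carrier (interval_monoid A r)"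
  then obtain u v where "set u \<subseteq> im_gens A r" "x = cls u" "set v \<subseteq> im_gens A r" "y = cls v"
    by (auto simp: carrier_M)
  then show "x \<otimes>\<^bsub>interval_monoid A r\<^esub> y \<in> carrier (interval_monoid A r)"
    by (simp add: mult_M cls_in)
next
  show "\<one>\<^bsub>interval_monoid A r\<^esub> \<in> carrier (interval_monoid A r)" by (auto simp: carrier_M one_M)
next
  fix x y z assume "x \<in> carrier (interval_monoid A r)" "y \<in> carrier (interval_monoid A r)"
    "z \<in> carrier (interval_monoid A r)"
  then show "x \<otimes>\<^bsub>interval_monoid A r\<^esub> y \<otimes>\<^bsub>interval_monoid A r\<^esub> z =
     x \<otimes>\<^bsub>interval_monoid A r\<^esub> (y \<otimes>\<^bsub>interval_monoid A r\<^esub> z)"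
    by (auto simp: carrier_M mult_M)
next
  fix x assume "x \<in> carrier (interval_monoid A r)"
  then show "\<one>\<^bsub>interval_monoid A r\<^esub> \<otimes>\<^bsub>interval_monoid A r\<^esub> x = x"
    by (auto simp: carrier_M mult_M one_M)
next
  fix x assume "x \<in> carrier (interval_monoid A r)"
  then show "x \<otimes>\<^bsub>interval_monoid A r\<^esub> \<one>\<^bsub>interval_monoid A r\<^esub> = x"
    by (auto simp: carrier_M mult_M one_M)
qed

lemma conical_M: "x \<in> carrier (interval_monoid A r) \<Longrightarrow> y \<in> carrier (interval_monoid A r) \<Longrightarrow>
  x \<otimes>\<^bsub>interval_monoid A r\<^esub> y = \<one>\<^bsub>interval_monoid A r\<^esub> \<Longrightarrow> x = \<one>\<^bsub>interval_monoid A r\<^esub>"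
proof -
  assume "x \<in> carrier (interval_monoid A r)" "y \<in> carrier (interval_monoid A r)"
    and e: "x \<otimes>\<^bsub>interval_monoid A r\<^esub> y = \<one>\<^bsub>interval_monoid A r\<^esub>"
  then obtain a b where a: "set a \<subseteq> im_gens A r" "red a" "x = cls a"
    and b: "set b \<subseteq> im_gens A r" "red b" "y = cls b" using carrier_red by metis
  have "cls (join a b) = cls []" using e a b join_props[of a b] by (simp add: mult_M one_M)
  then have "join a b = []" using red_eq[of "join a b" "[]"] join_props[of a b] a b by simp
  then have "a = []" using join_hd[of a b] by auto
  then show ?thesis using a by (simp add: one_M)
qed

lemma lcancel_M: "a \<in> carrier (interval_monoid A r) \<Longrightarrow> x \<in> carrier (interval_monoid A r) \<Longrightarrow>
  y \<in> carrier (interval_monoid A r) \<Longrightarrow>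
  a \<otimes>\<^bsub>interval_monoid A r\<^esub> x = a \<otimes>\<^bsub>interval_monoid A r\<^esub> y \<Longrightarrow> x = y"
proof -
  assume "a \<in> carrier (interval_monoid A r)" "x \<in> carrier (interval_monoid A r)"
    "y \<in> carrier (interval_monoid A r)"
    and e: "a \<otimes>\<^bsub>interval_monoid A r\<^esub> x = a \<otimes>\<^bsub>interval_monoid A r\<^esub> y"
  then obtain a' x' y' where a: "set a' \<subseteq> im_gens A r" "red a'" "a = cls a'"
    and x: "set x' \<subseteq> im_gens A r" "red x'" "x = cls x'"
    and y: "set y' \<subseteq> im_gens A r" "red y'" "y = cls y'" using carrier_red by metis
  have "cls (join a' x') = cls (join a' y')" using e a x y join_props[of a' x'] join_props[of a' y']
    by (simp add: mult_M)
  then have "join a' x' = join a' y'"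
    using red_eq[of "join a' x'" "join a' y'"] join_props[of a' x'] join_props[of a' y'] a x y by simp
  then have "x' = y'" using join_cancel x y by blast
  then show ?thesis using x y by simp
qed

lemma ldiv_join: "red d \<Longrightarrow> set d \<subseteq> im_gens A r \<Longrightarrow> set x \<subseteq> im_gens A r \<Longrightarrow> ldiv r d (join d x)"
proof (induction d)
  case Nil then show ?case by simp
next
  case (Cons g d)
  show ?case
  proof (cases "d = []")
    case True
    show ?thesis
    proof (cases x)
      case Nil then show ?thesis using True by (simp add: join_def rrefl)
    next
      case (Cons h x')
      then have "r (fst h) (snd h)" using Cons.prems by (auto simp: im_gens_def)
      then show ?thesis using True Cons by (auto simp: join_def rrefl)
    qed
  next
    case False
    then show ?thesis using Cons by (auto simp: join_Cons split: list.splits)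
  qed
qed

lemma red_tl: "red (g # w) \<Longrightarrow> red w" by simp

lemma ldiv_ex: "red d \<Longrightarrow> red a \<Longrightarrow> set d \<subseteq> im_gens A r \<Longrightarrow> set a \<subseteq> im_gens A r \<Longrightarrow>
   ldiv r d a \<Longrightarrow> \<exists>x. red x \<and> set x \<subseteq> im_gens A r \<and> join d x = a"
proof (induction d arbitrary: a)
  case Nil then show ?case by (auto simp: join_def)
next
  case (Cons g d)
  then obtain h a' where a: "a = h # a'" by (cases a) auto
  show ?case
  proof (cases "d = []")
    case True
    then have gh: "fst g = fst h" "r (snd g) (snd h)" using Cons.prems a by auto
    show ?thesis
    proof (cases "snd g = snd h")
      case True
      then have "g = h" using gh by (simp add: prod_eq_iff)
      moreover have "join [g] a' = g # a'" using Cons.prems a \<open>g = h\<close>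
        by (cases a') (auto simp: join_def)
      ultimately show ?thesis using \<open>d = []\<close> a Cons.prems by auto
    next
      case False
      let ?x = "(snd g, snd h) # a'"
      have "red ?x" using False Cons.prems a by (cases a') auto
      moreover have "set ?x \<subseteq> im_gens A r" using Cons.prems a gh by (auto simp: im_gens_def)
      moreover have "join [g] ?x = a" using a gh by (simp add: join_def prod_eq_iff)
      ultimately show ?thesis using \<open>d = []\<close> by blast
    qed
  next
    case False
    then have "g = h" "ldiv r d a'" using Cons.prems a by auto
    then obtain x where "red x" "set x \<subseteq> im_gens A r" "join d x = a'"
      using Cons.IH[of a'] Cons.prems a by (auto dest: red_tl)
    then show ?thesis using False a \<open>g = h\<close> join_Cons by metis
  qed
qed

lemma left_div_iff: "red d \<Longrightarrow> red a \<Longrightarrow> set d \<subseteq> im_gens A r \<Longrightarrow> set a \<subseteq> im_gens A r \<Longrightarrow>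
   left_div (interval_monoid A r) (cls d) (cls a) \<longleftrightarrow> ldiv r d a"
proof
  assume d: "red d" "set d \<subseteq> im_gens A r" and a: "red a" "set a \<subseteq> im_gens A r"
  assume "left_div (interval_monoid A r) (cls d) (cls a)"
  then obtain z where z: "z \<in> carrier (interval_monoid A r)" "cls a = cls d \<otimes>\<^bsub>interval_monoid A r\<^esub> z"
    by (auto simp: left_div_def)
  then obtain x where x: "set x \<subseteq> im_gens A r" "red x" "z = cls x" using carrier_red by metis
  have "cls a = cls (join d x)" using z x d join_props[of d x] by (simp add: mult_M)
  then have "a = join d x" using red_eq[of a "join d x"] join_props[of d x] a d x by simp
  then show "ldiv r d a" using ldiv_join d x by simp
next
  assume d: "red d" "set d \<subseteq> im_gens A r" and a: "red a" "set a \<subseteq> im_gens A r"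
  assume "ldiv r d a"
  then obtain x where x: "red x" "set x \<subseteq> im_gens A r" "join d x = a" using ldiv_ex d a by blast
  then have "cls a = cls d \<otimes>\<^bsub>interval_monoid A r\<^esub> cls x"
    using join_props[of d x] d by (simp add: mult_M)
  then show "left_div (interval_monoid A r) (cls d) (cls a)"
    unfolding left_div_def using cls_in[OF x(2)] by blast
qed

end


lemma lgcd_hd: "lgcd f a b \<noteq> [] \<Longrightarrow> a \<noteq> [] \<and> fst (hd (lgcd f a b)) = fst (hd a)"
  by (induction f a b rule: lgcd.induct) (auto split: if_splits)

locale pomeet = poctx +
  fixes m :: "'a \<Rightarrow> 'a \<Rightarrow> 'a"
  assumes meet: "s \<in> A \<Longrightarrow> t \<in> A \<Longrightarrow> t' \<in> A \<Longrightarrow> r s t \<Longrightarrow> r s t' \<Longrightarrow>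
     m t t' \<in> A \<and> r s (m t t') \<and> r (m t t') t \<and> r (m t t') t' \<and> (\<forall>u. r u t \<longrightarrow> r u t' \<longrightarrow> r u (m t t'))"
begin

lemma lgcd_gens: "set a \<subseteq> im_gens A r \<Longrightarrow> set b \<subseteq> im_gens A r \<Longrightarrow> set (lgcd m a b) \<subseteq> im_gens A r"
proof (induction a arbitrary: b)
  case (Cons g a b0)
  show ?case
  proof (cases b0)
    case (Cons h b)
    have P: "g \<in> im_gens A r" "set a \<subseteq> im_gens A r" "h \<in> im_gens A r" "set b \<subseteq> im_gens A r"
      using Cons.prems Cons by auto
    show ?thesis
    proof (cases "g = h")
      case True then show ?thesis using Cons.IH[of b] P Cons by auto
    next
      case False
      have "fst g \<in> A" "snd g \<in> A" "snd h \<in> A" "r (fst g) (snd g)" "r (fst h) (snd h)"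
        using P by (auto simp: im_gens_def)
      then show ?thesis using False Cons meet[of "fst g" "snd g" "snd h"] by (auto simp: im_gens_def)
    qed
  qed simp
qed simp

lemma lgcd_red: "red a \<Longrightarrow> red b \<Longrightarrow> red (lgcd m a b)"
proof (induction a arbitrary: b)
  case (Cons g a b0)
  show ?case
  proof (cases b0)
    case (Cons h b)
    show ?thesis
    proof (cases "g = h")
      case True
      have rg: "fst g \<noteq> snd g" "red a" "red b" using Cons.prems Cons by auto
      have IH: "red (lgcd m a b)" using Cons.IH rg by auto
      have "red (g # lgcd m a b)"
      proof (cases "lgcd m a b")
        case Nil then show ?thesis using rg by simp
      next
        case (Cons l ls)
        then have "a \<noteq> []" "fst l = fst (hd a)" using lgcd_hd[of m a b] by auto
        moreover have "snd g \<noteq> fst (hd a)" using Cons.prems(1) \<open>a \<noteq> []\<close> by (cases a) auto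
        ultimately show ?thesis using Cons rg IH by simp
      qed
      then show ?thesis using True Cons by simp
    next
      case False then show ?thesis using Cons by auto
    qed
  qed simp
qed simp

lemma lgcd_div: "set a \<subseteq> im_gens A r \<Longrightarrow> set b \<subseteq> im_gens A r \<Longrightarrow>
   ldiv r (lgcd m a b) a \<and> ldiv r (lgcd m a b) b"
proof (induction a arbitrary: b)
  case (Cons g a b0)
  show ?case
  proof (cases b0)
    case (Cons h b)
    have P: "g \<in> im_gens A r" "set a \<subseteq> im_gens A r" "h \<in> im_gens A r" "set b \<subseteq> im_gens A r"
      using Cons.prems Cons by auto
    show ?thesis
    proof (cases "g = h")
      case True
      then show ?thesis using Cons.IH[of b] P Cons by (cases "lgcd m a b") (auto simp: rrefl)
    next
      case False
      have "fst g \<in> A" "snd g \<in> A" "snd h \<in> A" "r (fst g) (snd g)" "r (fst h) (snd h)"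
        using P by (auto simp: im_gens_def)
      then show ?thesis using False Cons meet[of "fst g" "snd g" "snd h"] by auto
    qed
  qed simp
qed simp

lemma lgcd_univ: "set a \<subseteq> im_gens A r \<Longrightarrow> set b \<subseteq> im_gens A r \<Longrightarrow> red c \<Longrightarrow> set c \<subseteq> im_gens A r \<Longrightarrow>
   ldiv r c a \<Longrightarrow> ldiv r c b \<Longrightarrow> ldiv r c (lgcd m a b)"
proof (induction a arbitrary: b c)
  case Nil then show ?case by (cases c) auto
next
  case (Cons g a b0 c)
  show ?case
  proof (cases b0)
    case Nil then show ?thesis using Cons.prems by (cases c) auto
  next
    case (Cons h b)
    have P: "g \<in> im_gens A r" "set a \<subseteq> im_gens A r" "h \<in> im_gens A r" "set b \<subseteq> im_gens A r"
      using Cons.prems Cons by auto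
    show ?thesis
    proof (cases c)
      case Nil then show ?thesis by simp
    next
      case cc: (Cons k c')
      show ?thesis
      proof (cases "c' = []")
        case True
        then have kk: "fst k = fst g" "fst k = fst h" "r (snd k) (snd g)" "r (snd k) (snd h)"
          using Cons.prems Cons cc by auto
        have kr: "fst k \<noteq> snd k" "r (fst k) (snd k)" "fst k \<in> A"
          using Cons.prems cc by (auto simp: im_gens_def)
        show ?thesis
        proof (cases "g = h")
          case True then show ?thesis using kk Cons cc \<open>c' = []\<close> by simp
        next
          case False
          have "fst g \<in> A" "snd g \<in> A" "snd h \<in> A" "r (fst g) (snd g)" "r (fst h) (snd h)"
            using P by (auto simp: im_gens_def)
          then have mm: "r (snd k) (m (snd g) (snd h))" using meet[of "fst g" "snd g" "snd h"] kk by auto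
          have "fst g \<noteq> m (snd g) (snd h)"
          proof
            assume "fst g = m (snd g) (snd h)"
            then have "r (snd k) (fst k)" using mm kk by simp
            then show False using kr rantisym by blast
          qed
          then show ?thesis using False kk mm Cons cc \<open>c' = []\<close> by simp
        qed
      next
        case False
        then have kgh: "k = g" "k = h" "ldiv r c' a" "ldiv r c' b" using Cons.prems Cons cc by auto
        have "red c'" "set c' \<subseteq> im_gens A r" using Cons.prems cc by auto
        then have "ldiv r c' (lgcd m a b)"
          using Cons.IH[of b c'] P kgh by auto
        then show ?thesis using Cons cc False kgh
          by (cases "lgcd m a b") auto
      qed
    qed
  qed
qed

lemma left_gcd_M:
  assumes "a \<in> carrier (interval_monoid A r)" "b \<in> carrier (interval_monoid A r)"
  shows "\<exists>d\<in>carrier (interval_monoid A r).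
        left_div (interval_monoid A r) d a \<and> left_div (interval_monoid A r) d b \<and>
        (\<forall>c\<in>carrier (interval_monoid A r). left_div (interval_monoid A r) c a \<and>
            left_div (interval_monoid A r) c b \<longrightarrow> left_div (interval_monoid A r) c d)"
proof -
  obtain a' b' where a: "set a' \<subseteq> im_gens A r" "red a'" "a = cls a'"
    and b: "set b' \<subseteq> im_gens A r" "red b'" "b = cls b'" using carrier_red assms by metis
  let ?d = "lgcd m a' b'"
  have d: "set ?d \<subseteq> im_gens A r" "red ?d" using lgcd_gens lgcd_red a b by auto
  show ?thesis
  proof (intro bexI conjI ballI impI)
    show "cls ?d \<in> carrier (interval_monoid A r)" using d cls_in by auto
    show "left_div (interval_monoid A r) (cls ?d) a" using left_div_iff d a lgcd_div b by auto
    show "left_div (interval_monoid A r) (cls ?d) b" using left_div_iff d a lgcd_div b by auto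
  next
    fix c assume "c \<in> carrier (interval_monoid A r)"
      and h: "left_div (interval_monoid A r) c a \<and> left_div (interval_monoid A r) c b"
    then obtain c' where c: "set c' \<subseteq> im_gens A r" "red c'" "c = cls c'" using carrier_red by metis
    have "ldiv r c' a'" "ldiv r c' b'" using h left_div_iff c a b by auto
    then have "ldiv r c' ?d" using lgcd_univ a b c by auto
    then show "left_div (interval_monoid A r) c (cls ?d)" using left_div_iff c d by auto
  qed
qed

end


definition flipw :: "('a \<times> 'a) list \<Rightarrow> ('a \<times> 'a) list" where
  "flipw w = rev (map (\<lambda>(x, y). (y, x)) w)"

lemma flip_flip[simp]: "flipw (flipw w) = w"
  by (induction w) (auto simp: flipw_def rev_map)

lemma flip_app: "flipw (u @ v) = flipw v @ flipw u"
  by (simp add: flipw_def)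

lemma inj_flip: "inj flipw"
  by (metis flip_flip injI)

lemma im_gens_flip: "set w \<subseteq> im_gens A r \<Longrightarrow> set (flipw w) \<subseteq> im_gens A (\<lambda>x y. r y x)"
  by (auto simp: flipw_def im_gens_def)

lemma im_eq_flip: "im_eq A r u v \<Longrightarrow> im_eq A (\<lambda>x y. r y x) (flipw u) (flipw v)"
proof (induction rule: im_eq.induct)
  case (im_refl w) then show ?case using im_gens_flip by (blast intro: im_eq.im_refl)
next
  case (im_sym u v) then show ?case by (blast intro: im_eq.im_sym)
next
  case (im_trans u v w) then show ?case by (blast intro: im_eq.im_trans)
next
  case (im_unit x) then show ?case by (auto simp: flipw_def intro: im_eq.im_unit)
next
  case (im_split x y z)
  then show ?case by (auto simp: flipw_def intro: im_eq.im_split)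
next
  case (im_cong u u' v v')
  then show ?case by (auto simp: flip_app intro: im_eq.im_cong)
qed

lemma flip_cls: "flipw ` {v. im_eq A r w v} = {v. im_eq A (\<lambda>x y. r y x) (flipw w) v}"
proof (intro equalityI subsetI)
  fix v assume "v \<in> flipw ` {v. im_eq A r w v}"
  then show "v \<in> {v. im_eq A (\<lambda>x y. r y x) (flipw w) v}" using im_eq_flip by auto
next
  fix v assume "v \<in> {v. im_eq A (\<lambda>x y. r y x) (flipw w) v}"
  then have "im_eq A r w (flipw v)" using im_eq_flip[of A "\<lambda>x y. r y x" "flipw w" v] by simp
  then show "v \<in> flipw ` {v. im_eq A r w v}" by (metis (mono_tags) flip_flip image_eqI mem_Collect_eq)
qed

lemma transfer:
  fixes G :: "('a, 'c) monoid_scheme" and H :: "('b, 'd) monoid_scheme"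
  assumes mG: "monoid G" and bij: "bij_betw F (carrier G) (carrier H)"
    and hom: "\<And>x y. x \<in> carrier G \<Longrightarrow> y \<in> carrier G \<Longrightarrow> F (x \<otimes>\<^bsub>G\<^esub> y) = F y \<otimes>\<^bsub>H\<^esub> F x"
    and lc: "\<forall>a\<in>carrier H. \<forall>x\<in>carrier H. \<forall>y\<in>carrier H.
        a \<otimes>\<^bsub>H\<^esub> x = a \<otimes>\<^bsub>H\<^esub> y \<longrightarrow> x = y"
    and lg: "\<forall>a\<in>carrier H. \<forall>b\<in>carrier H. \<exists>d\<in>carrier H.
        left_div H d a \<and> left_div H d b \<and>
        (\<forall>c\<in>carrier H. left_div H c a \<and> left_div H c b \<longrightarrow> left_div H c d)"
  shows "(\<forall>a\<in>carrier G. \<forall>x\<in>carrier G. \<forall>y\<in>carrier G.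
        x \<otimes>\<^bsub>G\<^esub> a = y \<otimes>\<^bsub>G\<^esub> a \<longrightarrow> x = y) \<and>
     (\<forall>a\<in>carrier G. \<forall>b\<in>carrier G. \<exists>d\<in>carrier G.
        right_div G d a \<and> right_div G d b \<and>
        (\<forall>c\<in>carrier G. right_div G c a \<and> right_div G c b \<longrightarrow> right_div G c d))"
proof -
  have inj: "inj_on F (carrier G)" and img: "F ` carrier G = carrier H"
    using bij by (auto simp: bij_betw_def)
  have Fin: "\<And>x. x \<in> carrier G \<Longrightarrow> F x \<in> carrier H" using img by blast
  have rd: "right_div G c a \<longleftrightarrow> left_div H (F c) (F a)" if c: "c \<in> carrier G" and a: "a \<in> carrier G" for c a
  proof
    assume "right_div G c a"
    then obtain x where x: "x \<in> carrier G" "a = x \<otimes>\<^bsub>G\<^esub> c" by (auto simp: right_div_def)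
    then have "F a = F c \<otimes>\<^bsub>H\<^esub> F x" using hom c by simp
    then show "left_div H (F c) (F a)" using Fin[OF x(1)] by (auto simp: left_div_def)
  next
    assume "left_div H (F c) (F a)"
    then obtain z where z: "z \<in> carrier H" "F a = F c \<otimes>\<^bsub>H\<^esub> z" by (auto simp: left_div_def)
    then obtain x where x: "x \<in> carrier G" "z = F x" using img by blast
    then have "F a = F (x \<otimes>\<^bsub>G\<^esub> c)" using z hom c by simp
    moreover have "x \<otimes>\<^bsub>G\<^esub> c \<in> carrier G" using mG x c by (simp add: monoid.m_closed)
    ultimately have "a = x \<otimes>\<^bsub>G\<^esub> c" using inj_onD[OF inj _ a] by simp
    then show "right_div G c a" using x by (auto simp: right_div_def)
  qed
  show ?thesis
  proof (intro conjI ballI impI)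
    fix a x y assume a: "a \<in> carrier G" and x: "x \<in> carrier G" and y: "y \<in> carrier G"
      and e: "x \<otimes>\<^bsub>G\<^esub> a = y \<otimes>\<^bsub>G\<^esub> a"
    then have "F a \<otimes>\<^bsub>H\<^esub> F x = F a \<otimes>\<^bsub>H\<^esub> F y" using hom[OF x a] hom[OF y a] by simp
    then have "F x = F y" using lc[rule_format, OF Fin[OF a] Fin[OF x] Fin[OF y]] by simp
    then show "x = y" using inj_onD[OF inj _ x y] by simp
  next
    fix a b assume a: "a \<in> carrier G" and b: "b \<in> carrier G"
    then obtain d' where d': "d' \<in> carrier H" "left_div H d' (F a)" "left_div H d' (F b)"
      "\<forall>c\<in>carrier H. left_div H c (F a) \<and> left_div H c (F b) \<longrightarrow> left_div H c d'"
      using lg[rule_format, OF Fin[OF a] Fin[OF b]] by blast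
    then obtain d where d: "d \<in> carrier G" "d' = F d" using img by blast
    show "\<exists>d\<in>carrier G. right_div G d a \<and> right_div G d b \<and>
        (\<forall>c\<in>carrier G. right_div G c a \<and> right_div G c b \<longrightarrow> right_div G c d)"
    proof (intro bexI conjI ballI impI)
      show "right_div G d a" using rd d d' a by auto
      show "right_div G d b" using rd d d' b by auto
      fix c assume c: "c \<in> carrier G" and h: "right_div G c a \<and> right_div G c b"
      then have "left_div H (F c) (F a)" "left_div H (F c) (F b)" using rd a b by auto
      then have "left_div H (F c) d'" using d'(4) Fin[OF c] by blast
      then show "right_div G c d" using rd c d by auto
    qed (rule d(1))
  qed
qed

context poctx
begin

lemma conv: "poctx (\<lambda>x y. r y x)"
  by unfold_locales (auto intro: rrefl rtrans rantisym)

lemma flip_bij: "bij_betw (\<lambda>X. flipw ` X) (carrier (interval_monoid A r))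
    (carrier (interval_monoid A (\<lambda>x y. r y x)))"
proof -
  have c1: "carrier (interval_monoid A r) = {{v. im_eq A r u v} | u. set u \<subseteq> im_gens A r}"
    by (simp add: interval_monoid_def)
  have c2: "carrier (interval_monoid A (\<lambda>x y. r y x)) =
     {{v. im_eq A (\<lambda>x y. r y x) u v} | u. set u \<subseteq> im_gens A (\<lambda>x y. r y x)}"
    by (simp add: interval_monoid_def)
  have inj: "inj_on (\<lambda>X. flipw ` X) (carrier (interval_monoid A r))"
    by (rule inj_onI) (simp add: inj_image_eq_iff[OF inj_flip])
  have "(\<lambda>X. flipw ` X) ` carrier (interval_monoid A r) = carrier (interval_monoid A (\<lambda>x y. r y x))"
  proof (intro equalityI subsetI)
    fix Y assume "Y \<in> (\<lambda>X. flipw ` X) ` carrier (interval_monoid A r)"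
    then obtain u where "set u \<subseteq> im_gens A r" "Y = flipw ` {v. im_eq A r u v}" by (auto simp: c1)
    then show "Y \<in> carrier (interval_monoid A (\<lambda>x y. r y x))"
      unfolding c2 using flip_cls im_gens_flip by blast
  next
    fix Y assume "Y \<in> carrier (interval_monoid A (\<lambda>x y. r y x))"
    then obtain u where u: "set u \<subseteq> im_gens A (\<lambda>x y. r y x)" "Y = {v. im_eq A (\<lambda>x y. r y x) u v}"
      by (auto simp: c2)
    have "set (flipw u) \<subseteq> im_gens A r" using im_gens_flip[OF u(1)] by simp
    moreover have "Y = flipw ` {v. im_eq A r (flipw u) v}" using u flip_cls[of A r "flipw u"] by simp
    ultimately show "Y \<in> (\<lambda>X. flipw ` X) ` carrier (interval_monoid A r)" unfolding c1 by blast
  qed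
  then show ?thesis using inj by (simp add: bij_betw_def)
qed

lemma flip_hom: "x \<in> carrier (interval_monoid A r) \<Longrightarrow> y \<in> carrier (interval_monoid A r) \<Longrightarrow>
  flipw ` (x \<otimes>\<^bsub>interval_monoid A r\<^esub> y) =
  flipw ` y \<otimes>\<^bsub>interval_monoid A (\<lambda>x y. r y x)\<^esub> flipw ` x"
proof -
  assume "x \<in> carrier (interval_monoid A r)" "y \<in> carrier (interval_monoid A r)"
  then obtain u v where u: "set u \<subseteq> im_gens A r" "x = cls u" and v: "set v \<subseteq> im_gens A r" "y = cls v"
    by (auto simp: carrier_M)
  have fu: "flipw ` x = poctx.cls A (\<lambda>x y. r y x) (flipw u)"
    using u flip_cls[of A r u] by (simp add: cls_def poctx.cls_def[OF conv])
  have fv: "flipw ` y = poctx.cls A (\<lambda>x y. r y x) (flipw v)"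
    using v flip_cls[of A r v] by (simp add: cls_def poctx.cls_def[OF conv])
  have fuv: "flipw ` (x \<otimes>\<^bsub>interval_monoid A r\<^esub> y) = poctx.cls A (\<lambda>x y. r y x) (flipw v @ flipw u)"
  proof -
    have "x \<otimes>\<^bsub>interval_monoid A r\<^esub> y = cls (u @ v)" using u v by (simp add: mult_M)
    then show ?thesis using flip_cls[of A r "u @ v"] by (simp add: cls_def poctx.cls_def[OF conv] flip_app)
  qed
  show ?thesis using fu fv fuv poctx.mult_M[OF conv, where u="flipw v" and v="flipw u"] im_gens_flip[OF u(1)] im_gens_flip[OF v(1)] by simp
qed

end

lemma sc_meet1:
  assumes sc: "simplicial_complex V K" shows "pomeet K (\<subseteq>) (\<inter>)"
proof (intro pomeet.intro poctx.intro pomeet_axioms.intro)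
  fix s t t' assume h: "s \<in> K" "t \<in> K" "t' \<in> K" "s \<subseteq> t" "s \<subseteq> t'"
  have ne: "s \<noteq> {}" using sc h(1) unfolding simplicial_complex_def by blast
  have cl: "\<forall>s\<in>K. \<forall>t. t \<subseteq> s \<and> t \<noteq> {} \<longrightarrow> t \<in> K" using sc unfolding simplicial_complex_def by blast
  have "t \<inter> t' \<noteq> {}" using ne h by blast
  then have "t \<inter> t' \<in> K" using cl h(2) by blast
  then show "t \<inter> t' \<in> K \<and> s \<subseteq> t \<inter> t' \<and> t \<inter> t' \<subseteq> t \<and> t \<inter> t' \<subseteq> t' \<and>
      (\<forall>u. u \<subseteq> t \<longrightarrow> u \<subseteq> t' \<longrightarrow> u \<subseteq> t \<inter> t')" using h by blast
qed auto

lemma sc_meet2: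
  assumes sc: "simplicial_complex V K" shows "pomeet K (\<lambda>x y. y \<subseteq> x) (\<union>)"
proof (intro pomeet.intro poctx.intro pomeet_axioms.intro)
  fix s t t' assume h: "s \<in> K" "t \<in> K" "t' \<in> K" "t \<subseteq> s" "t' \<subseteq> s"
  have ne: "t \<noteq> {}" using sc h(2) unfolding simplicial_complex_def by blast
  have cl: "\<forall>s\<in>K. \<forall>t. t \<subseteq> s \<and> t \<noteq> {} \<longrightarrow> t \<in> K" using sc unfolding simplicial_complex_def by blast
  have "t \<union> t' \<noteq> {}" "t \<union> t' \<subseteq> s" using ne h by blast+
  then have "t \<union> t' \<in> K" using cl h(1) by blast
  then show "t \<union> t' \<in> K \<and> t \<union> t' \<subseteq> s \<and> t \<subseteq> t \<union> t' \<and> t' \<subseteq> t \<union> t' \<and>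
      (\<forall>u. t \<subseteq> u \<longrightarrow> t' \<subseteq> u \<longrightarrow> t \<union> t' \<subseteq> u)" using h by blast
qed auto

theorem corollary7p9:
  fixes V :: "'v set" and K :: "'v set set"
  assumes "simplicial_complex V K"
  shows "gcd_monoid (interval_monoid K (\<subseteq>))"
proof -
  interpret L: pomeet K "(\<subseteq>)" "(\<inter>)" using sc_meet1[OF assms] .
  interpret R: pomeet K "\<lambda>x y. y \<subseteq> x" "(\<union>)" using sc_meet2[OF assms] .
  let ?M = "interval_monoid K (\<subseteq>)"
  let ?N = "interval_monoid K (\<lambda>x y. y \<subseteq> x)"
  have lc: "\<forall>a\<in>carrier ?N. \<forall>x\<in>carrier ?N. \<forall>y\<in>carrier ?N.
        a \<otimes>\<^bsub>?N\<^esub> x = a \<otimes>\<^bsub>?N\<^esub> y \<longrightarrow> x = y"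
    using R.lcancel_M by blast
  have lg: "\<forall>a\<in>carrier ?N. \<forall>b\<in>carrier ?N. \<exists>d\<in>carrier ?N.
        left_div ?N d a \<and> left_div ?N d b \<and>
        (\<forall>c\<in>carrier ?N. left_div ?N c a \<and> left_div ?N c b \<longrightarrow> left_div ?N c d)"
    using R.left_gcd_M by blast
  note T = transfer[OF L.monoid_M L.flip_bij L.flip_hom lc lg]
  show ?thesis
    unfolding gcd_monoid_def
  proof (intro conjI)
    show "monoid ?M" by (rule L.monoid_M)
    show "\<forall>x\<in>carrier ?M. \<forall>y\<in>carrier ?M. x \<otimes>\<^bsub>?M\<^esub> y = \<one>\<^bsub>?M\<^esub> \<longrightarrow> x = \<one>\<^bsub>?M\<^esub>"
      using L.conical_M by blast
    show "\<forall>a\<in>carrier ?M. \<forall>x\<in>carrier ?M. \<forall>y\<in>carrier ?M.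
        a \<otimes>\<^bsub>?M\<^esub> x = a \<otimes>\<^bsub>?M\<^esub> y \<longrightarrow> x = y"
      using L.lcancel_M by blast
    show "\<forall>a\<in>carrier ?M. \<forall>b\<in>carrier ?M. \<exists>d\<in>carrier ?M.
        left_div ?M d a \<and> left_div ?M d b \<and>
        (\<forall>c\<in>carrier ?M. left_div ?M c a \<and> left_div ?M c b \<longrightarrow> left_div ?M c d)"
      by (intro ballI L.left_gcd_M)
  qed (use T in \<open>blast+\<close>)
qed


end
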